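(* Let $0<a<1$ and, for each integer $n\ge0$, write $(T_a(z))^n=\sum_{m=0}^\infty a_{m,n}z^m$ for $z\in\mathbb D$. Then for every $\alpha>0$ there exists $\rho>0$ (depending on $a$ and $\alpha$) such that for all integers $m,n\ge0$: $$|a_{m,n}|\le e^{-\alpha(\rho n-m)}.$$
   Context: $T_a(z)=\frac{a+z}{1+\bar a z}$ for $a\in\mathbb D$, an automorphism of the unit disk $\mathbb D$. *)

theory Defs
  imports "HOL-Analysis.Analysis"
begin

definition disk_aut :: "complex \<Rightarrow> complex \<Rightarrow> complex" where
  "disk_aut a z = (a + z) / (1 + cnj a * z)"

end

theory Submission
  imports Defs "HOL-Complex_Analysis.Complex_Analysis"
begin

lemma sq_ineq:
  fixes a r x y :: real
  assumes "0 < a" "a < 1" "0 \<le> r" "r < 1" "x^2 + y^2 = r^2"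
  shows "((a+x)^2 + y^2) * (1+a*r)^2 \<le> (a+r)^2 * ((1+a*x)^2 + (a*y)^2)"
proof -
  have "x^2 \<le> r^2" using assms(5) by (metis le_add_same_cancel1 zero_le_power2)
  hence xr: "x \<le> r" using assms(3) by (rule power2_le_imp_le)
  have e: "(a+r)^2 * ((1+a*x)^2 + (a*y)^2) - ((a+x)^2 + y^2) * (1+a*r)^2
      = 2*a*(r-x)*((1-a^2)*(1-r^2))"
  proof -
    have y2: "y^2 = r^2 - x^2" using assms by simp
    show ?thesis unfolding power_mult_distrib y2 by (simp add: power2_eq_square algebra_simps)
  qed
  have "0 \<le> 2*a*(r-x)*((1-a^2)*(1-r^2))"
  proof -
    have "a^2 < 1" using assms by (simp add: power_less_one_iff)
    moreover have "r^2 < 1" using assms by (simp add: power_less_one_iff)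
    ultimately show ?thesis using assms xr by (intro mult_nonneg_nonneg) auto
  qed
  with e show ?thesis by linarith
qed

lemma norm_bound:
  fixes a r :: real and z :: complex
  assumes "0 < a" "a < 1" "0 \<le> r" "r < 1" "cmod z = r"
  shows "cmod (disk_aut (complex_of_real a) z) \<le> (a+r)/(1+a*r)"
proof -
  have r2: "(Re z)^2 + (Im z)^2 = r^2" using assms(5) by (metis cmod_power2)
  have n1: "cmod (of_real a + z) = sqrt ((a + Re z)^2 + (Im z)^2)"
    by (simp add: cmod_def)
  have n2: "cmod (1 + of_real a * z) = sqrt ((1 + a*Re z)^2 + (a*Im z)^2)"
    by (simp add: cmod_def)
  have "0 \<le> a*r" using assms by (simp add: mult_nonneg_nonneg)
  hence pos: "0 < 1 + a*r" by linarith
  have d: "0 < (1 + a*Re z)^2 + (a*Im z)^2"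
  proof -
    have "\<bar>Re z\<bar> \<le> r" using assms abs_Re_le_cmod by blast
    hence "a*\<bar>Re z\<bar> \<le> a*r" using assms by (simp add: mult_left_mono)
    moreover have "a*r \<le> 1*r" using assms by (intro mult_right_mono) auto
    moreover have "a*\<bar>Re z\<bar> = \<bar>a * Re z\<bar>" using assms by (simp add: abs_mult)
    moreover have "- \<bar>a * Re z\<bar> \<le> a * Re z" by arith
    ultimately have "0 < 1 + a*Re z" using assms by linarith
    thus ?thesis by (simp add: add_pos_nonneg)
  qed
  have "sqrt ((a + Re z)^2 + (Im z)^2) / sqrt ((1 + a*Re z)^2 + (a*Im z)^2)
        = sqrt (((a + Re z)^2 + (Im z)^2) / ((1 + a*Re z)^2 + (a*Im z)^2))"
    by (simp add: real_sqrt_divide)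
  also have "\<dots> \<le> sqrt (((a+r)/(1+a*r))^2)"
  proof (rule real_sqrt_le_mono)
    define A where "A = (a + Re z)^2 + (Im z)^2"
    define B where "B = (1 + a*Re z)^2 + (a*Im z)^2"
    define C where "C = a + r"
    define D where "D = 1 + a*r"
    have B0: "0 < B" using d by (simp add: B_def)
    have D0: "0 < D^2" using pos by (simp add: D_def)
    have key: "A * D^2 \<le> C^2 * B" using sq_ineq[OF assms(1-4) r2]
      by (simp add: A_def B_def C_def D_def)
    have "A / B = (A * D^2) / (B * D^2)" using D0 by simp
    also have "\<dots> \<le> (C^2 * B) / (B * D^2)"
      using key B0 D0 by (intro divide_right_mono) auto
    also have "\<dots> = (C/D)^2" using B0 by (simp add: power_divide)
    finally show "((a + Re z)^2 + (Im z)^2) / ((1 + a*Re z)^2 + (a*Im z)^2) \<le> ((a+r)/(1+a*r))^2"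
      by (simp add: A_def B_def C_def D_def)
  qed
  also have "\<dots> = (a+r)/(1+a*r)" using pos assms by simp
  finally show ?thesis
    by (simp add: disk_aut_def norm_divide n1 n2)
qed

theorem mainTheorem8:
  fixes a :: real and c :: "nat \<Rightarrow> nat \<Rightarrow> complex"
  assumes "0 < a" and "a < 1"
    and "\<And>n z. z \<in> ball 0 1 \<Longrightarrow>
           (\<lambda>m. c m n * z ^ m) sums (disk_aut (complex_of_real a) z ^ n)"
  shows "\<forall>\<alpha>::real. \<alpha> > 0 \<longrightarrow> (\<exists>\<rho>::real. \<rho> > 0 \<and>
           (\<forall>m n::nat. cmod (c m n) \<le> exp (- \<alpha> * (\<rho> * real n - real m))))"
proof (intro allI impI)
  fix \<alpha> :: real assume al: "\<alpha> > 0"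
  define r where "r = exp (- \<alpha>)"
  have r0: "0 < r" and r1: "r < 1" using al by (auto simp: r_def)
  define q where "q = (a+r)/(1+a*r)"
  have "a*r \<le> 1*r" using assms r0 by (intro mult_right_mono) auto
  hence ar1: "a*r < 1" using r1 by linarith
  have q0: "0 < q" using assms r0 unfolding q_def by (intro divide_pos_pos) (auto intro: add_pos_pos)
  have q1: "q < 1"
  proof -
    have "a + r < 1 + a*r"
    proof -
      have "0 < (1-a)*(1-r)" using assms r1 by simp
      thus ?thesis by (simp add: algebra_simps)
    qed
    thus ?thesis using assms r0 by (simp add: q_def)
  qed
  define \<rho> where "\<rho> = - ln q / \<alpha>"
  have "ln q < 0" using q0 q1 by simp
  hence rho0: "\<rho> > 0" using al unfolding \<rho>_def by (simp add: divide_neg_pos)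
  have qexp: "q = exp (- \<alpha> * \<rho>)" using al q0 by (simp add: \<rho>_def)
  show "\<exists>\<rho>::real. \<rho> > 0 \<and>
           (\<forall>m n::nat. cmod (c m n) \<le> exp (- \<alpha> * (\<rho> * real n - real m)))"
  proof (intro exI conjI allI)
    show "\<rho> > 0" by (rule rho0)
    fix m n :: nat
    define f where "f = (\<lambda>z. disk_aut (complex_of_real a) z ^ n)"
    define F where "F = Abs_fps (\<lambda>m. c m n)"
    have "summable (\<lambda>m. c m n * (1/2) ^ m)"
      using assms(3)[of "1/2" n] by (auto simp: sums_iff)
    hence "conv_radius (\<lambda>m. c m n) \<ge> norm (1/2 :: complex)"
      by (rule conv_radius_geI)
    hence rad: "fps_conv_radius F > 0"
      by (auto simp: fps_conv_radius_def F_def elim!: less_le_trans[rotated])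
    have "eventually (\<lambda>z. z \<in> ball 0 1) (nhds (0::complex))"
      by (intro eventually_nhds_in_open) auto
    hence "eventually (\<lambda>z. eval_fps F z = f z) (nhds 0)"
    proof (rule eventually_mono)
      fix z :: complex assume "z \<in> ball 0 1"
      from assms(3)[OF this, of n] show "eval_fps F z = f z"
        by (simp add: eval_fps_def F_def f_def sums_iff)
    qed
    with rad have "f has_fps_expansion F" by (simp add: has_fps_expansion_def)
    hence cm: "c m n = (deriv ^^ m) f 0 / fact m"
      using fps_nth_fps_expansion[of f F m] by (simp add: F_def)
    have nz: "1 + cnj (complex_of_real a) * z \<noteq> 0" if "cmod z \<le> r" for z
    proof
      assume "1 + cnj (complex_of_real a) * z = 0"
      hence "cmod (complex_of_real a * z) = 1"
        by (metis add_eq_0_iff complex_cnj_complex_of_real norm_minus_cancel norm_one)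
      moreover have "cmod (complex_of_real a * z) \<le> a * r"
        using that assms by (simp add: norm_mult mult_left_mono)
      ultimately show False using ar1 by simp
    qed
    have hol: "f holomorphic_on cball 0 r"
      unfolding f_def disk_aut_def using nz
      by (intro holomorphic_intros) auto
    have bound: "norm ((deriv ^^ m) f 0) \<le> fact m * q^n / r^m"
    proof (rule Cauchy_inequality)
      show "f holomorphic_on ball 0 r" using hol by (rule holomorphic_on_subset) auto
      show "continuous_on (cball 0 r) f" using hol by (rule holomorphic_on_imp_continuous_on)
      show "0 < r" by (rule r0)
      fix x :: complex assume "norm (0 - x) = r"
      hence "cmod x = r" by simp
      hence "cmod (disk_aut (complex_of_real a) x) \<le> q"
        unfolding q_def using norm_bound assms r0 r1 by auto
      thus "cmod (f x) \<le> q^n" unfolding f_def norm_power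
        by (intro power_mono) auto
    qed
    have "cmod (c m n) \<le> q^n / r^m"
      using bound by (simp add: cm norm_divide field_simps)
    also have "q^n / r^m = exp (- \<alpha> * (\<rho> * real n - real m))"
    proof -
      have "q^n = exp (real n * (- \<alpha> * \<rho>))" unfolding qexp by (rule exp_of_nat_mult[symmetric])
      moreover have "r^m = exp (real m * (- \<alpha>))" unfolding r_def by (rule exp_of_nat_mult[symmetric])
      ultimately show ?thesis by (simp add: exp_diff[symmetric] algebra_simps)
    qed
    finally show "cmod (c m n) \<le> exp (- \<alpha> * (\<rho> * real n - real m))" .
  qed
qed

end
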